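(* Let $n\ge 2$ be an integer, let $\pi(x)$ denote the number of primes $\le x$ for real $x\ge 0$, and let $\omega(n)$ denote the number of distinct prime factors of $n$. Then $$\omega(n)=\sum_{i=1}^{\lfloor n/2\rfloor}\left[\pi\left(\frac{n}{i}\right)-\pi\left(\frac{n-1}{i}\right)\right].$$ *)

theory Defs
  imports "HOL-Computational_Algebra.Primes" Complex_Main
begin

definition prime_pi :: "real \<Rightarrow> nat" where
  "prime_pi x = card {p :: nat. prime p \<and> real p \<le> x}"

definition omega :: "nat \<Rightarrow> nat" where
  "omega n = card (prime_factors n)"

end

theory Submission
  imports Defs
begin

lemma fin_pp: "finite {p :: nat. prime p \<and> real p \<le> x}"
proof -
  have "{p :: nat. prime p \<and> real p \<le> x} \<subseteq> {..nat \<lceil>x\<rceil>}"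
  proof
    fix p assume "p \<in> {p :: nat. prime p \<and> real p \<le> x}"
    then have "real p \<le> x" by simp
    then have "of_int (int p) \<le> x" by simp
    then have "int p \<le> \<lceil>x\<rceil>" by (metis ceiling_mono ceiling_of_int)
    then show "p \<in> {..nat \<lceil>x\<rceil>}" by simp
  qed
  then show ?thesis by (rule finite_subset) auto
qed

lemma ddiv: "(n::nat) > 0 \<Longrightarrow> d dvd n \<Longrightarrow> n div (n div d) = d"
  by (elim dvdE) auto

lemma term_eq:
  fixes n i :: nat
  assumes "i \<ge> 1"
  shows "int (prime_pi (real n / real i)) - int (prime_pi ((real n - 1) / real i))
       = (if i dvd n \<and> prime (n div i) then 1 else 0)"
proof -
  define A where "A = {p :: nat. prime p \<and> real p \<le> real n / real i}"
  define B where "B = {p :: nat. prime p \<and> real p \<le> (real n - 1) / real i}"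
  have iA: "real p \<le> real n / real i \<longleftrightarrow> p * i \<le> n" for p
    using assms by (simp add: pos_le_divide_eq flip: of_nat_mult)
  have iB: "real p \<le> (real n - 1) / real i \<longleftrightarrow> p * i < n" for p
  proof -
    have "real p \<le> (real n - 1) / real i \<longleftrightarrow> real (p*i) \<le> real n - 1"
      using assms by (simp add: pos_le_divide_eq)
    also have "\<dots> \<longleftrightarrow> p * i < n" by linarith
    finally show ?thesis .
  qed
  have BA: "B \<subseteq> A" unfolding A_def B_def using iA iB by auto
  have fA: "finite A" unfolding A_def by (rule fin_pp)
  have diff: "A - B = {p. prime p \<and> p * i = n}"
    unfolding A_def B_def using iA iB by auto
  have "int (card A) - int (card B) = int (card (A - B))"
    using BA fA by (simp add: card_Diff_subset finite_subset of_nat_diff card_mono)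
  also have "card (A - B) = (if i dvd n \<and> prime (n div i) then 1 else 0)"
  proof (cases "i dvd n \<and> prime (n div i)")
    case True
    have "{p. prime p \<and> p * i = n} = {n div i}"
      using True assms by (auto elim!: dvdE)
    then show ?thesis using True diff by simp
  next
    case False
    have "{p. prime p \<and> p * i = n} = {}"
      using False assms by auto
    then show ?thesis using False diff by (simp only: if_False) simp
  qed
  finally show ?thesis unfolding prime_pi_def A_def B_def by simp
qed

theorem mainTheorem5:
  fixes n :: nat
  assumes "n \<ge> 2"
  shows "int (omega n) =
    (\<Sum>i = 1..n div 2. int (prime_pi (real n / real i)) - int (prime_pi ((real n - 1) / real i)))"
proof -
  define T where "T = {i \<in> {1..n div 2}. i dvd n \<and> prime (n div i)}"
  have "(\<Sum>i = 1..n div 2. int (prime_pi (real n / real i)) - int (prime_pi ((real n - 1) / real i)))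
      = (\<Sum>i = 1..n div 2. (if i dvd n \<and> prime (n div i) then 1 else 0))"
    by (rule sum.cong) (auto simp: term_eq)
  also have "\<dots> = int (card T)"
    unfolding T_def by (simp add: sum.If_cases Int_def conj_commute)
  also have "card T = card (prime_factors n)"
  proof -
    have "bij_betw (\<lambda>p. n div p) (prime_factors n) T"
    proof (rule bij_betw_byWitness[where f' = "\<lambda>i. n div i"])
      show "(\<lambda>p. n div p) ` prime_factors n \<subseteq> T"
      proof
        fix q assume "q \<in> (\<lambda>p. n div p) ` prime_factors n"
        then obtain p where p: "p \<in> prime_factors n" and q: "q = n div p" by auto
        from p have pp: "prime p" "p dvd n" using assms by auto
        then have p2: "p \<ge> 2" using prime_ge_2_nat by blast
        have n0: "n > 0" using assms by simp
        have "n div p \<ge> 1" using pp n0 dvd_imp_le[of p n] div_greater_zero_iff[of n p] prime_gt_0_nat[of p] by simp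
        moreover have "n div p \<le> n div 2" using p2 by (simp add: div_le_mono2)
        moreover have "n div p dvd n" using pp by (metis dvd_def dvd_div_mult_self dvd_triv_right)
        moreover have "n div (n div p) = p" using pp n0
          by (simp add: ddiv)
        ultimately show "q \<in> T" unfolding T_def q using pp by auto
      qed
      show "(\<lambda>i. n div i) ` T \<subseteq> prime_factors n"
      proof
        fix q assume "q \<in> (\<lambda>i. n div i) ` T"
        then obtain i where "i \<in> T" and q: "q = n div i" by auto
        then have "i \<ge> 1" "i dvd n" "prime (n div i)" unfolding T_def by auto
        then show "q \<in> prime_factors n" unfolding q using assms
          by (auto simp: prime_factors_dvd dvd_div_iff_mult)
      qed
      show "\<forall>p\<in>prime_factors n. n div (n div p) = p"
        using assms by (auto intro!: ddiv)
      show "\<forall>i\<in>T. n div (n div i) = i"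
        using assms unfolding T_def
        by (simp add: ddiv)
    qed
    then show ?thesis by (simp add: bij_betw_same_card)
  qed
  finally show ?thesis unfolding omega_def by simp
qed

end
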